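(* Let $M\in\mathbb N$ and let $X(M)$ be the subshift defined below. For $n\ge1$, the number $p_n(X(M))$ of $n$-periodic points of $X(M)$ is $$(2M+1)^n+(M+2)^n-\sum_{i=0}^{n/2}\binom{n}{i}2^i\left(M^i+M^{n-i}\right)+\binom{n}{n/2}(2M)^{n/2}\quad\text{if } n \text{ is even},$$ $$(2M+1)^n+(M+2)^n-\sum_{i=0}^{(n-1)/2}\binom{n}{i}2^i\left(M^i+M^{n-i}\right)\quad\text{if } n \text{ is odd}.$$
   Context: Let $\Sigma_1=\{\lambda,\xi,\rho_1,\dots,\rho_M,\eta_1,\dots,\eta_M\}$. $\mathcal M_1(M)$ is the monoid with zero generated by $\Sigma_1$ and an identity $\mathbf 1$, subject only to the relations $\lambda\rho_i=\mathbf 1$, $\lambda\eta_i=0$, $\xi\eta_i=\mathbf 1$, $\xi\rho_i=0$ ($1\le i\le M$), $\mathbf 1$ is the identity and $0$ is absorbing; no other relations. $\mathit{red}:\Sigma_1^*\to\mathcal M_1(M)$ sends a word to the product of its letters (empty word to $\mathbf 1$). $X(M)=\{x\in\Sigma_1^{\mathbb Z}:\mathit{red}(x_i\cdots x_j)\neq 0\ \forall i\le j\}$ with shift $\sigma$, and $p_n(X(M))=\#\{x\in X(M):\sigma^nx=x\}$. *)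

theory Defs
  imports Main
begin

datatype sym = Lam | Xi | Rho nat | Eta nat

definition Sigma1 :: "nat \<Rightarrow> sym set" where
  "Sigma1 M = {Lam, Xi} \<union> {Rho i | i. 1 \<le> i \<and> i \<le> M} \<union> {Eta i | i. 1 \<le> i \<and> i \<le> M}"

text \<open>The free monoid with zero over sym: Some w is the word w, None is the zero.\<close>
fun fmul :: "sym list option \<Rightarrow> sym list option \<Rightarrow> sym list option" where
  "fmul (Some a) (Some b) = Some (a @ b)"
| "fmul _ _ = None"

text \<open>The monoid congruence generated by the defining relations of M_1(M).\<close>
inductive_set mcong :: "nat \<Rightarrow> (sym list option \<times> sym list option) set" for M :: nat where
  rel_lr: "1 \<le> i \<Longrightarrow> i \<le> M \<Longrightarrow> (Some [Lam, Rho i], Some []) \<in> mcong M"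
| rel_le: "1 \<le> i \<Longrightarrow> i \<le> M \<Longrightarrow> (Some [Lam, Eta i], None) \<in> mcong M"
| rel_xe: "1 \<le> i \<Longrightarrow> i \<le> M \<Longrightarrow> (Some [Xi, Eta i], Some []) \<in> mcong M"
| rel_xr: "1 \<le> i \<Longrightarrow> i \<le> M \<Longrightarrow> (Some [Xi, Rho i], None) \<in> mcong M"
| refl: "(a, a) \<in> mcong M"
| sym: "(a, b) \<in> mcong M \<Longrightarrow> (b, a) \<in> mcong M"
| trans: "(a, b) \<in> mcong M \<Longrightarrow> (b, c) \<in> mcong M \<Longrightarrow> (a, c) \<in> mcong M"
| compat: "(a, b) \<in> mcong M \<Longrightarrow> (fmul c (fmul a d), fmul c (fmul b d)) \<in> mcong M"

definition red_is_zero :: "nat \<Rightarrow> sym list \<Rightarrow> bool" where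
  "red_is_zero M w \<longleftrightarrow> (Some w, None) \<in> mcong M"

definition XM :: "nat \<Rightarrow> (int \<Rightarrow> sym) set" where
  "XM M = {x. (\<forall>k. x k \<in> Sigma1 M) \<and>
              (\<forall>i j. i \<le> j \<longrightarrow> \<not> red_is_zero M (map x [i..j]))}"

definition periodic_points :: "nat \<Rightarrow> nat \<Rightarrow> nat" where
  "periodic_points M n = card {x \<in> XM M. (\<lambda>k. x (k + int n)) = x}"

end

theory Submission
  imports Defs
begin


definition isop :: "sym \<Rightarrow> bool" where "isop a \<longleftrightarrow> a = Lam \<or> a = Xi"
definition iscl :: "nat \<Rightarrow> sym \<Rightarrow> bool" where
  "iscl M a \<longleftrightarrow> (\<exists>i. 1 \<le> i \<and> i \<le> M \<and> (a = Rho i \<or> a = Eta i))"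
fun ty :: "sym \<Rightarrow> bool" where
  "ty Lam = True" | "ty Xi = False" | "ty (Rho _) = True" | "ty (Eta _) = False"
fun step :: "nat \<Rightarrow> sym \<Rightarrow> sym list option \<Rightarrow> sym list option" where
  "step M a None = None"
| "step M a (Some []) = Some [a]"
| "step M a (Some (b#t)) = (if isop b \<and> iscl M a then (if ty a = ty b then Some t else None) else Some (a#b#t))"

definition run :: "nat \<Rightarrow> sym list option \<Rightarrow> sym list \<Rightarrow> sym list option" where
  "run M s w = fold (step M) w s"

fun runo :: "nat \<Rightarrow> sym list option \<Rightarrow> sym list option \<Rightarrow> sym list option" where
  "runo M s None = None" | "runo M s (Some w) = run M s w"

lemma run_None[simp]: "run M None w = None"
  unfolding run_def by (induction w) auto

lemma run_append: "run M s (u @ v) = run M (run M s u) v"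
  unfolding run_def by simp

lemma run_Nil[simp]: "run M s [] = s" unfolding run_def by simp
lemma run_Cons: "run M s (a # w) = run M (step M a s) w" unfolding run_def by simp

lemma step_push: "\<not> iscl M a \<Longrightarrow> step M a (Some st) = Some (a # st)"
  by (cases st) auto

lemma iscl_simps[simp]: "\<not> iscl M Lam" "\<not> iscl M Xi" "iscl M (Rho i) \<longleftrightarrow> 1 \<le> i \<and> i \<le> M"
  "iscl M (Eta i) \<longleftrightarrow> 1 \<le> i \<and> i \<le> M"
  by (auto simp: iscl_def)
lemma isop_simps[simp]: "isop Lam" "isop Xi" "\<not> isop (Rho i)" "\<not> isop (Eta i)"
  by (auto simp: isop_def)

lemma runo_fmul: "runo M s (fmul c d) = runo M (runo M s c) d"
  by (cases c; cases d) (auto simp: run_append)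

lemma mcong_inv: "(a, b) \<in> mcong M \<Longrightarrow> runo M s a = runo M s b"
proof (induction arbitrary: s rule: mcong.induct)
  case (rel_lr i) then show ?case by (cases s) (auto simp: run_Cons step_push)
next
  case (rel_le i) then show ?case by (cases s) (auto simp: run_Cons step_push)
next
  case (rel_xe i) then show ?case by (cases s) (auto simp: run_Cons step_push)
next
  case (rel_xr i) then show ?case by (cases s) (auto simp: run_Cons step_push)
next
  case (compat a b c d) then show ?case by (simp add: runo_fmul)
qed auto

lemma pair_rel:
  assumes "isop b" "iscl M a"
  shows "(Some [b, a], if ty a = ty b then Some [] else None) \<in> mcong M"
proof -
  obtain i where i: "1 \<le> i" "i \<le> M" "a = Rho i \<or> a = Eta i" using assms(2) unfolding iscl_def by blast
  have "b = Lam \<or> b = Xi" using assms(1) unfolding isop_def .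
  then show ?thesis using i by (elim disjE) (simp_all add: mcong.rel_lr mcong.rel_le mcong.rel_xe mcong.rel_xr)
qed

lemma run_zero_mcong: "run M (Some st) w = None \<Longrightarrow> (Some (rev st @ w), None) \<in> mcong M"
proof (induction w arbitrary: st)
  case Nil then show ?case by simp
next
  case (Cons a w)
  show ?case
  proof (cases st)
    case Nil
    then show ?thesis using Cons.IH[of "[a]"] Cons.prems by (simp add: run_Cons)
  next
    fix b t assume Cons2: "st = b # t"
    show ?thesis
    proof (cases "isop b \<and> iscl M a")
      case True
      have c: "(fmul (Some (rev t)) (fmul (Some [b,a]) (Some w)),
                fmul (Some (rev t)) (fmul (if ty a = ty b then Some [] else None) (Some w))) \<in> mcong M"
        using mcong.compat[OF pair_rel[of b M a]] True by blast
      show ?thesis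
      proof (cases "ty a = ty b")
        case True2: True
        have "run M (Some t) w = None" using Cons.prems Cons2 True True2 by (simp add: run_Cons)
        then have "(Some (rev t @ w), None) \<in> mcong M" using Cons.IH by blast
        moreover have "(Some (rev st @ a # w), Some (rev t @ w)) \<in> mcong M"
          using c True2 Cons2 by simp
        ultimately show ?thesis by (blast intro: mcong.trans)
      next
        case False
        then show ?thesis using c Cons2 by simp
      qed
    next
      case False
      then have "step M a (Some st) = Some (a#b#t)" using Cons2 by simp
      then have "run M (Some (a # b # t)) w = None" using Cons.prems by (simp add: run_Cons)
      then have "(Some (rev (a # b # t) @ w), None) \<in> mcong M" by (rule Cons.IH)
      then show ?thesis using Cons2 by simp
    qed
  qed
qed

lemma red_is_zero_run: "red_is_zero M w \<longleftrightarrow> run M (Some []) w = None"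
proof
  assume "red_is_zero M w"
  then show "run M (Some []) w = None" using mcong_inv[of "Some w" None M "Some []"]
    unfolding red_is_zero_def by simp
next
  assume "run M (Some []) w = None"
  then show "red_is_zero M w" using run_zero_mcong[of M "[]" w] unfolding red_is_zero_def by simp
qed

lemma zero_any: "run M (Some []) u = None \<Longrightarrow> run M s u = None"
  using run_zero_mcong[of M "[]" u] mcong_inv[of "Some u" None M s] by simp



definition cv :: "nat \<Rightarrow> sym list \<Rightarrow> bool" where
  "cv M w \<longleftrightarrow> (\<forall>m. run M (Some []) (concat (replicate m w)) \<noteq> None)"

lemma concat_rep_swap: "concat (replicate (Suc m) (x @ y)) = x @ concat (replicate m (y @ x)) @ y"
  by (induction m) auto

lemma cv_swap: "cv M (x @ y) \<Longrightarrow> cv M (y @ x)"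
  unfolding cv_def
proof (intro allI notI)
  fix m assume h: "\<forall>m. run M (Some []) (concat (replicate m (x @ y))) \<noteq> None"
    and z: "run M (Some []) (concat (replicate m (y @ x))) = None"
  have "run M (Some []) (concat (replicate (Suc m) (x @ y))) = None"
    unfolding concat_rep_swap run_append using zero_any[OF z] by simp
  with h show False by blast
qed

lemma cv_rotate1: "cv M (rotate1 w) \<longleftrightarrow> cv M w"
proof (cases w)
  case (Cons a xs)
  show ?thesis using cv_swap[of M "[a]" xs] cv_swap[of M xs "[a]"] Cons by auto
qed simp

lemma cv_rotate: "cv M (rotate k w) \<longleftrightarrow> cv M w"
  by (induction k) (auto simp: rotate_Suc cv_rotate1)

lemma run_pair: "isop a \<Longrightarrow> iscl M b \<Longrightarrow> ty a = ty b \<Longrightarrow> run M s (a # b # u) = run M s u"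
  by (cases s) (auto simp: run_Cons step_push isop_def)

lemma run_rep_pair: "isop a \<Longrightarrow> iscl M b \<Longrightarrow> ty a = ty b \<Longrightarrow>
  run M s (concat (replicate m (a # b # u))) = run M s (concat (replicate m u))"
proof (induction m arbitrary: s)
  case (Suc m)
  have "run M s (concat (replicate (Suc m) (a # b # u))) = run M (run M s (a # b # u)) (concat (replicate m (a # b # u)))"
    by (simp add: run_append[symmetric])
  also have "\<dots> = run M (run M s u) (concat (replicate m u))" using Suc by (simp add: run_pair)
  finally show ?case by (simp add: run_append)
qed simp

lemma cv_pair: assumes "isop a" "iscl M b"
  shows "cv M (a # b # u) \<longleftrightarrow> ty a = ty b \<and> cv M u"
proof (cases "ty a = ty b")
  case True
  then show ?thesis using run_rep_pair[OF assms True] unfolding cv_def by simp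
next
  case False
  have "run M (Some []) (concat (replicate 1 (a # b # u))) = None"
    using assms False by (auto simp: run_Cons isop_def)
  then show ?thesis using False unfolding cv_def by blast
qed

lemma run_noncl: "\<forall>a\<in>set w. \<not> iscl M a \<Longrightarrow> run M (Some st) w \<noteq> None"
  by (induction w arbitrary: st) (auto simp: run_Cons step_push)

lemma run_noop: "\<forall>a\<in>set w. \<not> isop a \<Longrightarrow> \<forall>b\<in>set st. \<not> isop b \<Longrightarrow> run M (Some st) w \<noteq> None"
proof (induction w arbitrary: st)
  case (Cons a w)
  have "step M a (Some st) = Some (a # st)" using Cons.prems by (cases st) auto
  then show ?case using Cons by (simp add: run_Cons)
qed simp

lemma cv_noncl: "\<forall>a\<in>set w. \<not> iscl M a \<Longrightarrow> cv M w"
  unfolding cv_def by (intro allI run_noncl) auto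

lemma cv_noop: "\<forall>a\<in>set w. \<not> isop a \<Longrightarrow> cv M w"
  unfolding cv_def by (intro allI run_noop) auto



lemma Sigma1_iff: "a \<in> Sigma1 M \<longleftrightarrow> isop a \<or> iscl M a"
  unfolding Sigma1_def isop_def iscl_def by auto

lemma finite_Sigma1: "finite (Sigma1 M)"
  unfolding Sigma1_def by auto

definition S :: "nat \<Rightarrow> bool list \<Rightarrow> sym list set" where
  "S M P = {w. set w \<subseteq> Sigma1 M \<and> map isop w = P \<and> cv M w}"

lemma finite_S: "finite (S M P)"
proof -
  have "S M P \<subseteq> {w. set w \<subseteq> Sigma1 M \<and> length w = length P}"
    unfolding S_def by auto
  then show ?thesis using finite_lists_length_eq[OF finite_Sigma1] finite_subset by blast
qed

lemma cyc_exists: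
  assumes "True \<in> set P" "False \<in> set P"
  shows "\<exists>i<length P. P ! i \<and> \<not> P ! (Suc i mod length P)"
proof (rule ccontr)
  assume "\<not> ?thesis"
  then have H: "\<And>i. i < length P \<Longrightarrow> P ! i \<Longrightarrow> P ! (Suc i mod length P)" by blast
  let ?n = "length P"
  obtain i0 where i0: "i0 < ?n" "P ! i0" using assms(1) by (metis in_set_conv_nth)
  have n0: "?n > 0" using i0(1) by arith
  have all: "P ! ((i0 + d) mod ?n)" for d
  proof (induction d)
    case 0 then show ?case using i0 by simp
  next
    case (Suc d)
    have "P ! (Suc ((i0 + d) mod ?n) mod ?n)" using H[OF _ Suc] n0 by simp
    then show ?case by (simp add: mod_Suc_eq)
  qed
  obtain j where j: "j < ?n" "\<not> P ! j" using assms(2) by (metis in_set_conv_nth)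
  have "(i0 + (j + ?n - i0)) mod ?n = j" using i0 j by simp
  then show False using all[of "j + ?n - i0"] j by simp
qed

lemma S_rotate: assumes "i < length P" shows "card (S M (rotate i P)) = card (S M P)"
proof -
  let ?n = "length P"
  have "bij_betw (rotate i) (S M P) (S M (rotate i P))"
  proof (rule bij_betw_byWitness[where f' = "rotate (?n - i)"])
    show "\<forall>a\<in>S M P. rotate (?n - i) (rotate i a) = a"
    proof
      fix a assume "a \<in> S M P"
      then have "length a = ?n" unfolding S_def by auto
      then show "rotate (?n - i) (rotate i a) = a" using assms by (simp add: rotate_rotate)
    qed
    show "\<forall>a\<in>S M (rotate i P). rotate i (rotate (?n - i) a) = a"
    proof
      fix a assume "a \<in> S M (rotate i P)"
      then have "length a = ?n" unfolding S_def by (metis (mono_tags, lifting) length_map length_rotate mem_Collect_eq)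
      then show "rotate i (rotate (?n - i) a) = a" using assms by (simp add: rotate_rotate)
    qed
    show "rotate i ` S M P \<subseteq> S M (rotate i P)"
      unfolding S_def by (auto simp: cv_rotate rotate_map)
    show "rotate (?n - i) ` S M (rotate i P) \<subseteq> S M P"
    proof
      fix b assume "b \<in> rotate (?n - i) ` S M (rotate i P)"
      then obtain a where a: "a \<in> S M (rotate i P)" "b = rotate (?n - i) a" by blast
      then have "map isop b = rotate (?n - i) (rotate i P)" unfolding S_def by (auto simp: rotate_map[symmetric])
      also have "\<dots> = P" using assms by (simp add: rotate_rotate)
      finally show "b \<in> S M P" using a unfolding S_def by (auto simp: cv_rotate)
    qed
  qed
  then show ?thesis by (simp add: bij_betw_same_card)
qed

definition Pairs :: "nat \<Rightarrow> (sym \<times> sym) set" where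
  "Pairs M = {(a, b). isop a \<and> iscl M b \<and> ty a = ty b}"

lemma card_Pairs: "card (Pairs M) = 2 * M"
proof -
  have e: "Pairs M = (\<lambda>i. (Lam, Rho i)) ` {1..M} \<union> (\<lambda>i. (Xi, Eta i)) ` {1..M}"
    unfolding Pairs_def isop_def iscl_def by auto
  have a: "card ((\<lambda>i. (Lam, Rho i)) ` {1..M}) = M" by (subst card_image) (auto simp: inj_on_def)
  have b: "card ((\<lambda>i. (Xi, Eta i)) ` {1..M}) = M" by (subst card_image) (auto simp: inj_on_def)
  have "card (Pairs M) = card ((\<lambda>i. (Lam, Rho i)) ` {1..M}) + card ((\<lambda>i. (Xi, Eta i)) ` {1..M})"
    unfolding e by (rule card_Un_disjoint) auto
  then show ?thesis using a b by linarith
qed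

lemma S_TF: "S M (True # False # Q) = (\<lambda>(p, u). fst p # snd p # u) ` (Pairs M \<times> S M Q)"
proof
  show "S M (True # False # Q) \<subseteq> (\<lambda>(p, u). fst p # snd p # u) ` (Pairs M \<times> S M Q)"
  proof
    fix w assume w: "w \<in> S M (True # False # Q)"
    then obtain a b u where abu: "w = a # b # u" unfolding S_def by (auto simp: map_eq_Cons_conv)
    have ia: "isop a" and nb: "\<not> isop b" and mu: "map isop u = Q" and sw: "set w \<subseteq> Sigma1 M" and c: "cv M w"
      using w abu unfolding S_def by auto
    have ib: "iscl M b" using sw nb abu by (auto simp: Sigma1_iff)
    have "ty a = ty b \<and> cv M u" using c abu cv_pair[OF ia ib] by simp
    then have "((a, b), u) \<in> Pairs M \<times> S M Q" using ia ib mu sw abu unfolding Pairs_def S_def by auto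
    then show "w \<in> (\<lambda>(p, u). fst p # snd p # u) ` (Pairs M \<times> S M Q)" using abu by force
  qed
  show "(\<lambda>(p, u). fst p # snd p # u) ` (Pairs M \<times> S M Q) \<subseteq> S M (True # False # Q)"
  proof
    fix w assume "w \<in> (\<lambda>(p, u). fst p # snd p # u) ` (Pairs M \<times> S M Q)"
    then obtain a b u where abu: "w = a # b # u" "(a, b) \<in> Pairs M" "u \<in> S M Q" by auto
    then have ia: "isop a" and ib: "iscl M b" and t: "ty a = ty b" unfolding Pairs_def by auto
    have nb: "\<not> isop b" using ib unfolding isop_def iscl_def by auto
    show "w \<in> S M (True # False # Q)" using abu ia ib t nb cv_pair[OF ia ib]
      unfolding S_def by (auto simp: Sigma1_iff)
  qed
qed

lemma card_S_TF: "card (S M (True # False # Q)) = 2 * M * card (S M Q)"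
proof -
  have "inj_on (\<lambda>(p, u). fst p # snd p # u) (Pairs M \<times> S M Q)"
    by (auto simp: inj_on_def)
  then show ?thesis unfolding S_TF by (simp add: card_image card_cartesian_product card_Pairs)
qed

lemma S_allT: assumes "False \<notin> set P"
  shows "S M P = {w. set w \<subseteq> {Lam, Xi} \<and> length w = length P}"
proof
  show "S M P \<subseteq> {w. set w \<subseteq> {Lam, Xi} \<and> length w = length P}"
  proof
    fix w assume "w \<in> S M P"
    then have "map isop w = P" unfolding S_def by auto
    then have "\<forall>a\<in>set w. isop a" using assms by auto
    then show "w \<in> {w. set w \<subseteq> {Lam, Xi} \<and> length w = length P}" using \<open>map isop w = P\<close>
      unfolding isop_def by auto
  qed
  show "{w. set w \<subseteq> {Lam, Xi} \<and> length w = length P} \<subseteq> S M P"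
  proof
    fix w assume w: "w \<in> {w. set w \<subseteq> {Lam, Xi} \<and> length w = length P}"
    then have "\<forall>a\<in>set w. isop a \<and> \<not> iscl M a" by (auto simp: isop_def iscl_def)
    moreover have "map isop w = P"
    proof (rule nth_equalityI)
      show "length (map isop w) = length P" using w by simp
      fix i assume i: "i < length (map isop w)"
      then have il: "i < length w" "i < length P" using w by auto
      have "w ! i \<in> {Lam, Xi}" using w nth_mem[OF il(1)] by blast
      moreover have "P ! i" using nth_mem[OF il(2)] assms by (smt (verit))
      ultimately show "map isop w ! i = P ! i" using i by (auto simp: isop_def)
    qed
    ultimately show "w \<in> S M P" unfolding S_def using cv_noncl by (auto simp: Sigma1_iff)
  qed
qed

definition Cl :: "nat \<Rightarrow> sym set" where "Cl M = {a. iscl M a}"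

lemma card_Cl: "card (Cl M) = 2 * M"
proof -
  have e: "Cl M = Rho ` {1..M} \<union> Eta ` {1..M}" unfolding Cl_def iscl_def by auto
  have a: "card (Rho ` {1..M}) = M" by (subst card_image) (auto simp: inj_on_def)
  have b: "card (Eta ` {1..M}) = M" by (subst card_image) (auto simp: inj_on_def)
  have "card (Cl M) = card (Rho ` {1..M}) + card (Eta ` {1..M})"
    unfolding e by (rule card_Un_disjoint) auto
  then show ?thesis using a b by linarith
qed

lemma finite_Cl: "finite (Cl M)"
proof -
  have e: "Cl M = Rho ` {1..M} \<union> Eta ` {1..M}" unfolding Cl_def iscl_def by auto
  show ?thesis unfolding e by auto
qed

lemma S_allF: assumes "True \<notin> set P"
  shows "S M P = {w. set w \<subseteq> Cl M \<and> length w = length P}"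
proof
  show "S M P \<subseteq> {w. set w \<subseteq> Cl M \<and> length w = length P}"
  proof
    fix w assume w: "w \<in> S M P"
    then have "map isop w = P" "set w \<subseteq> Sigma1 M" unfolding S_def by auto
    then have "\<forall>a\<in>set w. \<not> isop a" using assms by auto
    then show "w \<in> {w. set w \<subseteq> Cl M \<and> length w = length P}" using \<open>map isop w = P\<close> \<open>set w \<subseteq> Sigma1 M\<close>
      unfolding Cl_def by (auto simp: Sigma1_iff)
  qed
  show "{w. set w \<subseteq> Cl M \<and> length w = length P} \<subseteq> S M P"
  proof
    fix w assume w: "w \<in> {w. set w \<subseteq> Cl M \<and> length w = length P}"
    then have "\<forall>a\<in>set w. \<not> isop a \<and> iscl M a" by (auto simp: isop_def iscl_def Cl_def)
    moreover have "map isop w = P"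
    proof (rule nth_equalityI)
      show "length (map isop w) = length P" using w by simp
      fix i assume i: "i < length (map isop w)"
      then have il: "i < length w" "i < length P" using w by auto
      have "\<not> isop (w ! i)" using calculation nth_mem[OF il(1)] by blast
      moreover have "\<not> P ! i" using nth_mem[OF il(2)] assms by (smt (verit))
      ultimately show "map isop w ! i = P ! i" using i by auto
    qed
    ultimately show "w \<in> S M P" unfolding S_def using cv_noop by (auto simp: Sigma1_iff)
  qed
qed



lemma len_filter_rotate: "length (filter f (rotate k xs)) = length (filter f xs)"
proof -
  have "length (filter f xs) = length (filter f (take (k mod length xs) xs @ drop (k mod length xs) xs))"
    by simp
  then show ?thesis unfolding rotate_drop_take filter_append length_append by linarith
qed

lemma card_S: "card (S M P) = 2 ^ max (length (filter id P)) (length (filter Not P)) * M ^ length (filter Not P)"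
proof (induction "length P" arbitrary: P rule: less_induct)
  case less
  show ?case
  proof (cases "True \<in> set P \<and> False \<in> set P")
    case True
    then obtain i where i: "i < length P" "P ! i" "\<not> P ! (Suc i mod length P)"
      using cyc_exists by blast
    let ?n = "length P"
    let ?R = "rotate i P"
    have "Suc i mod ?n \<noteq> i" using i by auto
    then have n2: "?n \<ge> 2" using i(1) by (cases "?n = 1") auto
    have ne: "P \<noteq> []" "1 < length P" using n2 by auto
    have R0: "?R ! 0" using i ne nth_rotate[of 0 P i] by simp
    have R1: "\<not> ?R ! 1" using i ne nth_rotate[of 1 P i] by simp
    have lR: "length ?R = ?n" by simp
    have "?R = ?R ! 0 # ?R ! 1 # drop 2 ?R"
      using ne Cons_nth_drop_Suc[of 0 ?R] Cons_nth_drop_Suc[of 1 ?R] by (simp add: numeral_2_eq_2)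
    then have Req: "?R = True # False # drop 2 ?R" using R0 R1 by simp
    define Q where "Q = drop 2 ?R"
    have lQ: "length Q < ?n" unfolding Q_def using n2 by simp
    have "card (S M P) = card (S M ?R)" using S_rotate[OF i(1)] by simp
    also have "\<dots> = 2 * M * card (S M Q)" unfolding Q_def by (subst Req) (rule card_S_TF)
    also have "\<dots> = 2 * M * (2 ^ max (length (filter id Q)) (length (filter Not Q)) * M ^ length (filter Not Q))"
      using less(1)[OF lQ] by simp
    finally have c: "card (S M P) = 2 * M * (2 ^ max (length (filter id Q)) (length (filter Not Q)) * M ^ length (filter Not Q))" .
    have Req2: "?R = True # False # Q" using Req unfolding Q_def .
    have f1: "length (filter id P) = Suc (length (filter id Q))"
      using len_filter_rotate[of id i P] by (simp add: Req2)
    have f2: "length (filter Not P) = Suc (length (filter Not Q))"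
      using len_filter_rotate[of Not i P] by (simp add: Req2)
    show ?thesis unfolding c f1 f2 by simp

  next
    case False
    show ?thesis
    proof (cases "False \<in> set P")
      case False
      then have allT: "\<forall>x\<in>set P. x" by (metis (full_types))
      then have "filter id P = P" "filter Not P = []" by (simp_all add: filter_True filter_False)
      moreover have "card (S M P) = 2 ^ length P"
        using S_allT[OF False] card_lists_length_eq[of "{Lam, Xi}"] by (simp add: numeral_2_eq_2)
      ultimately show ?thesis by simp
    next
      case True
      then have T: "True \<notin> set P" using \<open>\<not> (True \<in> set P \<and> False \<in> set P)\<close> by blast
      then have allF: "\<forall>x\<in>set P. \<not> x" by (metis (full_types))
      then have "filter id P = []" "filter Not P = P" by (simp_all add: filter_True filter_False)
      moreover have "card (S M P) = (2 * M) ^ length P"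
        using S_allF[OF T] card_lists_length_eq[OF finite_Cl] card_Cl by simp
      ultimately show ?thesis by (simp add: power_mult_distrib)
    qed
  qed
qed



definition W :: "nat \<Rightarrow> nat \<Rightarrow> sym list set" where
  "W M n = {w. set w \<subseteq> Sigma1 M \<and> length w = n \<and> cv M w}"

lemma finite_bool_lists: "finite {P :: bool list. length P = n}"
  using finite_lists_length_eq[of "UNIV :: bool set" n] by simp

lemma card_W_sum: "card (W M n) = (\<Sum>P\<in>{P. length P = n}. card (S M P))"
proof -
  have e: "W M n = (\<Union>P\<in>{P. length P = n}. S M P)"
    unfolding W_def S_def by auto
  show ?thesis unfolding e
    by (rule card_UN_disjoint[OF finite_bool_lists]) (auto simp: finite_S[unfolded S_def] S_def)
qed

lemma binom_step: fixes f :: "nat \<Rightarrow> nat"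
  shows "(\<Sum>k\<le>Suc n. (Suc n choose k) * f k) = (\<Sum>k\<le>n. (n choose k) * f (Suc k)) + (\<Sum>k\<le>n. (n choose k) * f k)"
proof -
  have "(\<Sum>k\<le>Suc n. (Suc n choose k) * f k) = f 0 + (\<Sum>k\<le>n. (Suc n choose Suc k) * f (Suc k))"
    by (subst sum.atMost_Suc_shift) simp
  also have "\<dots> = f 0 + (\<Sum>k\<le>n. (n choose k) * f (Suc k)) + (\<Sum>k\<le>n. (n choose Suc k) * f (Suc k))"
    by (simp add: sum.distrib algebra_simps)
  also have "(\<Sum>k\<le>n. (n choose Suc k) * f (Suc k)) = (\<Sum>k<n. (n choose Suc k) * f (Suc k))"
    by (simp add: lessThan_Suc_atMost[symmetric])
  also have "f 0 + (\<Sum>k\<le>n. (n choose k) * f (Suc k)) + (\<Sum>k<n. (n choose Suc k) * f (Suc k))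
      = (\<Sum>k\<le>n. (n choose k) * f (Suc k)) + (f 0 + (\<Sum>k<n. (n choose Suc k) * f (Suc k)))" by simp
  also have "f 0 + (\<Sum>k<n. (n choose Suc k) * f (Suc k)) = (\<Sum>k\<le>n. (n choose k) * f k)"
  proof (cases n)
    case 0 then show ?thesis by simp
  next
    case (Suc m)
    then show ?thesis by (simp only: sum.atMost_Suc_shift lessThan_Suc_atMost) simp
  qed
  finally show ?thesis .
qed

lemma sum_bool_lists: fixes f :: "nat \<Rightarrow> nat"
  shows "(\<Sum>P\<in>{P. length P = n}. f (length (filter id P))) = (\<Sum>k\<le>n. (n choose k) * f k)"
proof (induction n arbitrary: f)
  case 0
  then show ?case by simp
next
  case (Suc n)
  have e: "{P :: bool list. length P = Suc n} = (\<lambda>(b, P). b # P) ` (UNIV \<times> {P. length P = n})"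
    by (auto simp: length_Suc_conv)
  have inj: "inj_on (\<lambda>(b :: bool, P). b # P) (UNIV \<times> {P. length P = n})" by (auto simp: inj_on_def)
  have "(\<Sum>P\<in>{P. length P = Suc n}. f (length (filter id P)))
      = (\<Sum>x\<in>UNIV \<times> {P. length P = n}. f (length (filter id ((\<lambda>(b, P). b # P) x))))"
    unfolding e by (subst sum.reindex[OF inj]) (simp add: comp_def)
  also have "\<dots> = (\<Sum>b\<in>UNIV. \<Sum>P\<in>{P. length P = n}. f (length (filter id (b # P))))"
    by (simp add: sum.cartesian_product split_def)
  also have "\<dots> = (\<Sum>P\<in>{P. length P = n}. f (Suc (length (filter id P)))) + (\<Sum>P\<in>{P. length P = n}. f (length (filter id P)))"
    by (simp add: UNIV_bool)
  also have "\<dots> = (\<Sum>k\<le>n. (n choose k) * f (Suc k)) + (\<Sum>k\<le>n. (n choose k) * f k)"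
    using Suc[of "\<lambda>k. f (Suc k)"] Suc[of f] by (simp add: id_def)
  finally show ?case unfolding binom_step .
qed



lemma upto_shift: "map f [a..a + int L - 1] = map (\<lambda>k. f (a + int k)) [0..<L]"
proof (induction L)
  case 0 then show ?case by simp
next
  case (Suc L)
  have "[a..a + int (Suc L) - 1] = [a..a + int L - 1] @ [a + int L]"
    using upto_rec2[of a "a + int L"] by simp
  then show ?case using Suc by simp
qed

lemma upt_shift: "map f [r..<r + L] = map (\<lambda>k. f (r + k)) [0..<L]"
  by (induction L) auto

lemma concat_rep_map: assumes "length w = n" "n > 0"
  shows "concat (replicate m w) = map (\<lambda>k. w ! (k mod n)) [0..<m * n]"
proof (induction m)
  case 0 then show ?case by simp
next
  case (Suc m)
  have "[0..<Suc m * n] = [0..<n] @ [n..<n + m * n]"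
    using upt_add_eq_append[of 0 n "m * n"] by simp
  moreover have "map (\<lambda>k. w ! (k mod n)) [0..<n] = w"
    using assms by (intro nth_equalityI) auto
  moreover have "map (\<lambda>k. w ! (k mod n)) [n..<n + m * n] = map (\<lambda>k. w ! (k mod n)) [0..<m * n]"
    unfolding upt_shift by simp
  ultimately show ?case using Suc by simp
qed

definition psi :: "nat \<Rightarrow> sym list \<Rightarrow> int \<Rightarrow> sym" where
  "psi n w k = w ! nat (k mod int n)"

lemma psi_shift: assumes "n > 0" shows "psi n w (a * int n + int k) = w ! (k mod n)"
proof -
  have "(a * int n + int k) mod int n = int (k mod n)" using assms
    by (simp add: zmod_int)
  then show ?thesis unfolding psi_def by simp
qed

lemma XM_cv: assumes "length w = n" "n > 0"
  shows "(\<forall>i j. i \<le> j \<longrightarrow> \<not> red_is_zero M (map (psi n w) [i..j])) \<longleftrightarrow> cv M w"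
proof
  assume H: "\<forall>i j. i \<le> j \<longrightarrow> \<not> red_is_zero M (map (psi n w) [i..j])"
  show "cv M w" unfolding cv_def
  proof
    fix m
    show "run M (Some []) (concat (replicate m w)) \<noteq> None"
    proof (cases m)
      case 0 then show ?thesis by simp
    next
      case (Suc m')
      have "concat (replicate m w) = map (\<lambda>k. w ! (k mod n)) [0..<m * n]"
        using concat_rep_map[OF assms] .
      also have "\<dots> = map (\<lambda>k. psi n w (0 * int n + int k)) [0..<m * n]"
        using psi_shift[OF assms(2), of w 0] by simp
      also have "\<dots> = map (psi n w) [0..0 + int (m * n) - 1]"
        using upto_shift[of "psi n w" 0 "m * n"] by simp
      finally have e: "concat (replicate m w) = map (psi n w) [0..int (m * n) - 1]" by simp
      have "m * n > 0" using Suc assms(2) by simp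
      then have "0 \<le> int (m * n) - 1" by linarith
      then show ?thesis using H e red_is_zero_run by metis
    qed
  qed
next
  assume C: "cv M w"
  show "\<forall>i j. i \<le> j \<longrightarrow> \<not> red_is_zero M (map (psi n w) [i..j])"
  proof (intro allI impI notI)
    fix i j :: int assume ij: "i \<le> j" and z: "red_is_zero M (map (psi n w) [i..j])"
    define a where "a = i div int n"
    define r where "r = nat (i - a * int n)"
    define L where "L = nat (j - i + 1)"
    define m where "m = r + L"
    have im: "i - a * int n = i mod int n" unfolding a_def by (simp add: minus_div_mult_eq_mod)
    have "i mod int n \<ge> 0" using assms(2) by simp
    then have ir: "i = a * int n + int r" unfolding r_def using im by linarith
    have jL: "j = i + int L - 1" unfolding L_def using ij by simp
    have "m * 1 \<le> m * n" using assms(2) by (intro mult_le_mono2) simp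
    then have mn: "r + L \<le> m * n" unfolding m_def by simp
    let ?g = "\<lambda>k. w ! (k mod n)"
    have B: "map (psi n w) [i..j] = map ?g [r..<r + L]"
    proof -
      have "map (psi n w) [i..j] = map (\<lambda>k. psi n w (i + int k)) [0..<L]"
        unfolding jL by (rule upto_shift)
      also have "\<dots> = map (\<lambda>k. ?g (r + k)) [0..<L]"
      proof -
        have h: "psi n w (i + int k) = ?g (r + k)" for k
          using psi_shift[OF assms(2), of w a "r + k"] ir by (simp add: add.assoc)
        show ?thesis by (simp add: h)
      qed
      also have "\<dots> = map ?g [r..<r + L]" by (simp add: upt_shift)
      finally show ?thesis .
    qed
    have sp: "[0..<m * n] = [0..<r] @ [r..<r + L] @ [r + L..<m * n]"
      using upt_add_eq_append[of 0 r L] upt_add_eq_append[of 0 "r + L" "m * n - (r + L)"] mn by simp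
    have "concat (replicate m w) = map ?g [0..<r] @ map (psi n w) [i..j] @ map ?g [r + L..<m * n]"
      unfolding concat_rep_map[OF assms] sp B by simp
    moreover have "run M (Some []) (map (psi n w) [i..j]) = None" using z red_is_zero_run by blast
    ultimately have "run M (Some []) (concat (replicate m w)) = None"
      by (simp add: run_append zero_any)
    then show False using C unfolding cv_def by blast
  qed
qed



lemma algebra_main:
  fixes M n :: nat
  shows "int (\<Sum>k\<le>n. (n choose k) * (2 ^ max k (n - k) * M ^ (n - k))) =
        (2 * int M + 1) ^ n + (int M + 2) ^ n
        - (\<Sum>i = 0..n div 2. int (n choose i) * 2 ^ i * (int M ^ i + int M ^ (n - i)))
        + (if even n then int (n choose (n div 2)) * (2 * int M) ^ (n div 2) else 0)"
proof -
  define a where "a k = int (n choose k) * (2 * int M) ^ (n - k)" for k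
  define b where "b k = int (n choose k) * 2 ^ k * int M ^ (n - k)" for k
  have F1: "(2 * int M + 1) ^ n = (\<Sum>k\<le>n. a k)"
    unfolding a_def using binomial_ring[of 1 "2 * int M" n] by (simp add: add.commute)
  have F2: "(int M + 2) ^ n = (\<Sum>k\<le>n. b k)"
    unfolding b_def using binomial_ring[of 2 "int M" n] by (simp add: add.commute mult.assoc)
  have S1: "(\<Sum>i = 0..n div 2. int (n choose i) * 2 ^ i * int M ^ (n - i)) = (\<Sum>k\<le>n. if 2 * k \<le> n then b k else 0)"
  proof -
    have "{k \<in> {..n}. 2 * k \<le> n} = {0..n div 2}" by auto
    then show ?thesis unfolding b_def using sum.inter_filter[of "{..n}" "\<lambda>k. int (n choose k) * 2 ^ k * int M ^ (n - k)" "\<lambda>k. 2 * k \<le> n"]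
      by simp
  qed
  have S2: "(\<Sum>i = 0..n div 2. int (n choose i) * 2 ^ i * int M ^ i) = (\<Sum>k\<le>n. if n \<le> 2 * k then a k else 0)"
  proof -
    have "(\<Sum>i = 0..n div 2. int (n choose i) * 2 ^ i * int M ^ i) = (\<Sum>k\<in>{k \<in> {..n}. n \<le> 2 * k}. a k)"
    proof (rule sum.reindex_bij_witness[of _ "\<lambda>k. n - k" "\<lambda>i. n - i"])
      fix k assume "k \<in> {k \<in> {..n}. n \<le> 2 * k}"
      then show "n - (n - k) = k" "n - k \<in> {0..n div 2}" by auto
    next
      fix i assume i: "i \<in> {0..n div 2}"
      then show "n - (n - i) = i" "n - i \<in> {k \<in> {..n}. n \<le> 2 * k}" by auto
      have "n - (n - i) = i" using i by auto
      then show "a (n - i) = int (n choose i) * 2 ^ i * int M ^ i"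
        unfolding a_def using i by (simp add: binomial_symmetric[symmetric] power_mult_distrib)
    qed
    then show ?thesis using sum.inter_filter[of "{..n}" a "\<lambda>k. n \<le> 2 * k"] by simp
  qed
  have S3: "(if even n then int (n choose (n div 2)) * (2 * int M) ^ (n div 2) else 0) = (\<Sum>k\<le>n. if 2 * k = n then a k else 0)"
  proof (cases "even n")
    case True
    have "(\<Sum>k\<le>n. if 2 * k = n then a k else 0) = (\<Sum>k\<le>n. if k = n div 2 then a k else 0)"
      using True by (intro sum.cong) auto
    also have "\<dots> = a (n div 2)" by simp
    also have "\<dots> = int (n choose (n div 2)) * (2 * int M) ^ (n div 2)"
      unfolding a_def using True by (metis add_diff_cancel_right' mult_2 dvd_mult_div_cancel)
    finally show ?thesis using True by simp
  next
    case False
    then have "\<And>k. 2 * k \<noteq> n" by auto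
    then show ?thesis using False by simp
  qed
  have L: "int (\<Sum>k\<le>n. (n choose k) * (2 ^ max k (n - k) * M ^ (n - k)))
      = (\<Sum>k\<le>n. a k + b k - (if n \<le> 2 * k then a k else 0) - (if 2 * k \<le> n then b k else 0) + (if 2 * k = n then a k else 0))"
    unfolding of_nat_sum
  proof (rule sum.cong[OF HOL.refl])
    fix k assume "k \<in> {..n}"
    consider "2 * k < n" | "2 * k > n" | "2 * k = n" by linarith
    then show "int ((n choose k) * (2 ^ max k (n - k) * M ^ (n - k))) =
      a k + b k - (if n \<le> 2 * k then a k else 0) - (if 2 * k \<le> n then b k else 0) + (if 2 * k = n then a k else 0)"
    proof cases
      case 1
      then have "max k (n - k) = n - k" by auto
      then show ?thesis using 1 unfolding a_def by (simp add: power_mult_distrib)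
    next
      case 2
      then have "max k (n - k) = k" by auto
      then show ?thesis using 2 unfolding b_def by simp
    next
      case 3
      then have "max k (n - k) = k" "n - k = k" by auto
      then show ?thesis using 3 unfolding a_def b_def by (simp add: power_mult_distrib)
    qed
  qed
  show ?thesis unfolding L F1 F2 S3 sum_distrib_left ring_distribs sum.distrib sum_subtractf
    using S1 S2 by (simp add: sum_subtractf sum.distrib)
qed



lemma per_mod: assumes "(\<lambda>k. x (k + int n)) = x" shows "x k = x (k mod int n)"
proof -
  have st: "x (j + int n) = x j" for j using fun_cong[OF assms, of j] by simp
  have plus: "x (j + int n * int m) = x j" for j m
  proof (induction m)
    case (Suc m)
    have "x (j + int n * int (Suc m)) = x ((j + int n * int m) + int n)" by (simp add: algebra_simps)
    then show ?case using st Suc by simp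
  qed simp
  show ?thesis
  proof (cases "k div int n \<ge> 0")
    case True
    have "k mod int n = k - int n * int (nat (k div int n))" using True by (simp add: minus_div_mult_eq_mod[symmetric] mult.commute)
    then show ?thesis using plus[of "k - int n * int (nat (k div int n))" "nat (k div int n)"] by simp
  next
    case False
    have "k mod int n = k + int n * int (nat (- (k div int n)))" using False by (simp add: minus_div_mult_eq_mod[symmetric] mult.commute)
    then show ?thesis using plus[of k "nat (- (k div int n))"] by simp
  qed
qed

lemma periodic_card: assumes "n \<ge> 1" shows "periodic_points M n = card (W M n)"
proof -
  have n0: "n > 0" using assms by simp
  let ?PS = "{x \<in> XM M. (\<lambda>k. x (k + int n)) = x}"
  let ?phi = "\<lambda>x. map (\<lambda>k. x (int k)) [0..<n]"
  have A1: "psi n (?phi x) = x" if "x \<in> ?PS" for x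
  proof
    fix k
    have p: "(\<lambda>k. x (k + int n)) = x" using that by simp
    have "0 \<le> k mod int n" "k mod int n < int n" using n0 by simp_all
    then have "nat (k mod int n) < n" by linarith
    then have "psi n (?phi x) k = x (int (nat (k mod int n)))" unfolding psi_def by simp
    also have "\<dots> = x (k mod int n)" using n0 by simp
    also have "\<dots> = x k" using per_mod[OF p] by simp
    finally show "psi n (?phi x) k = x k" .
  qed
  have A2: "?phi (psi n w) = w" if "w \<in> W M n" for w
  proof -
    have l: "length w = n" using that unfolding W_def by simp
    show ?thesis
    proof (rule nth_equalityI)
      show "length (?phi (psi n w)) = length w" using l by simp
      fix k assume "k < length (?phi (psi n w))"
      then have k: "k < n" by simp
      have "psi n w (int k) = w ! k" unfolding psi_def using k by (simp add: zmod_int)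
      then show "?phi (psi n w) ! k = w ! k" using k by simp
    qed
  qed
  have A3: "?phi x \<in> W M n" if "x \<in> ?PS" for x
  proof -
    have x: "\<forall>k. x k \<in> Sigma1 M" "\<forall>i j. i \<le> j \<longrightarrow> \<not> red_is_zero M (map x [i..j])"
      using that unfolding XM_def by auto
    have "set (?phi x) \<subseteq> Sigma1 M" using x(1) by auto
    moreover have "cv M (?phi x)"
      using XM_cv[of "?phi x" n M] n0 x(2) A1[OF that] by simp
    ultimately show ?thesis unfolding W_def by simp
  qed
  have A4: "psi n w \<in> ?PS" if "w \<in> W M n" for w
  proof -
    have w: "set w \<subseteq> Sigma1 M" "length w = n" "cv M w" using that unfolding W_def by auto
    have "psi n w k \<in> Sigma1 M" for k
    proof -
      have "0 \<le> k mod int n" "k mod int n < int n" using n0 by simp_all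
      then have "nat (k mod int n) < n" by linarith
      then show ?thesis unfolding psi_def using w by (metis nth_mem subsetD)
    qed
    moreover have "\<forall>i j. i \<le> j \<longrightarrow> \<not> red_is_zero M (map (psi n w) [i..j])"
      using XM_cv[of w n M] w n0 by simp
    moreover have "(\<lambda>k. psi n w (k + int n)) = psi n w" unfolding psi_def by simp
    ultimately show ?thesis unfolding XM_def by simp
  qed
  have "bij_betw ?phi ?PS (W M n)"
    by (rule bij_betw_byWitness[where f' = "psi n"]) (use A1 A2 A3 A4 in auto)
  then show ?thesis unfolding periodic_points_def by (simp add: bij_betw_same_card)
qed

lemma card_W_closed: "card (W M n) = (\<Sum>k\<le>n. (n choose k) * (2 ^ max k (n - k) * M ^ (n - k)))"
proof -
  have fn: "length (filter Not P) = length P - length (filter id P)" for P :: "bool list"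
    by (induction P) (auto simp: Suc_diff_le length_filter_le)
  have "card (W M n) = (\<Sum>P\<in>{P. length P = n}. (\<lambda>k. 2 ^ max k (n - k) * M ^ (n - k)) (length (filter id P)))"
    unfolding card_W_sum card_S by (intro sum.cong) (auto simp: fn)
  also have "\<dots> = (\<Sum>k\<le>n. (n choose k) * (2 ^ max k (n - k) * M ^ (n - k)))"
    by (rule sum_bool_lists)
  finally show ?thesis .
qed

theorem proposition3p3:
  fixes M n :: nat
  assumes "n \<ge> 1"
  shows "int (periodic_points M n) =
     (if even n then
        (2 * int M + 1) ^ n + (int M + 2) ^ n
        - (\<Sum>i = 0..n div 2. int (n choose i) * 2 ^ i * (int M ^ i + int M ^ (n - i)))
        + int (n choose (n div 2)) * (2 * int M) ^ (n div 2)
      else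
        (2 * int M + 1) ^ n + (int M + 2) ^ n
        - (\<Sum>i = 0..(n - 1) div 2. int (n choose i) * 2 ^ i * (int M ^ i + int M ^ (n - i))))"
proof -
  have e: "int (periodic_points M n) = (2 * int M + 1) ^ n + (int M + 2) ^ n
        - (\<Sum>i = 0..n div 2. int (n choose i) * 2 ^ i * (int M ^ i + int M ^ (n - i)))
        + (if even n then int (n choose (n div 2)) * (2 * int M) ^ (n div 2) else 0)"
    unfolding periodic_card[OF assms] card_W_closed by (rule algebra_main)
  show ?thesis
  proof (cases "even n")
    case True then show ?thesis using e by simp
  next
    case False
    then have "(n - 1) div 2 = n div 2" by (metis odd_two_times_div_two_nat diff_Suc_1 nonzero_mult_div_cancel_left zero_neq_numeral)
    then show ?thesis using e False by simp
  qed
qed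

end
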